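(* There is an absolute constant $C>0$ such that for every $n\ge2$, all concave non-decreasing valuations $v_1,\dots,v_n:[0,1]\to\mathbb R_{\ge0}$ and all budgets $B_1,\dots,B_n>0$, the final allocation $y$ of the Estimate-and-Price auction (player $r_1$ receiving his allocation as specified by the auction, every other player $i$ receiving $x_i$ from Sell-Without-$r_1$) satisfies $\bar W(y)\ge\frac{1}{C\log n}\bar W^*$.
   Context: One divisible good (the interval $[0,1]$), $n\ge2$ players with valuations $v_i$ and budgets $B_i$. Let $\bar v_i(y)=\min\{v_i(y),B_i\}$ and $k=\lceil 8\log_2 n\rceil$. Liquid welfare: $\bar W(y)=\sum_i\min\{v_i(y_i),B_i\}$; $\bar W^*=\sup\{\bar W(y):y\in\mathbb R^n_{\ge0},\sum_iy_i=1\}$. Sell-Without-$r$ (for a player $r$): define $p:[0,\frac12]\to\mathbb R_{\ge0}$ by $p(t)=p_j=\frac{2^j}{8}\bar v_r(\frac12)$ for $t\in[\frac{j-1}{2k},\frac{j}{2k})$, $j=1,\dots,k$. The players other than $r$ are processed in a fixed arbitrary order; when player $i$'s turn comes, let $z_i$ be the total amount taken by earlier players; player $i$ takes $x_i\in[0,\frac12-z_i]$ maximizing $v_i(x_i)-\int_{z_i}^{z_i+x_i}p(t)\,dt$ subject to $\int_{z_i}^{z_i+x_i}p(t)\,dt\le B_i$, and pays $\pi_i=\int_{z_i}^{z_i+x_i}p(t)\,dt$. Estimate-and-Price: let $r_1=\arg\max_i\bar v_i(\frac12)$ and $r_2=\arg\max_{i\ne r_1}\bar v_i(\frac12)$ (fixed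 tie-breaking). Let $(x,\pi)$ be the outcome of Sell-Without-$r_1$ on players $[n]\setminus\{r_1\}$ and $(x',\pi')$ that of Sell-Without-$r_2$ on players $[n]\setminus\{r_2\}$. Each $i\ne r_1$ receives $x_i$ and pays $\pi_i$. Player $r_1$ receives $x'_{r_1}$ and pays $\pi'_{r_1}$ if $v_{r_1}(x'_{r_1})-\pi'_{r_1}\ge v_{r_1}(\frac12)-2\bar v_{r_2}(\frac12)$; otherwise he receives $\frac12$ and pays $2\bar v_{r_2}(\frac12)$. *)

theory Defs
  imports "HOL-Analysis.Analysis"
begin

text \<open>Players are indexed by 0..<n. Valuations v :: nat => real => real, budgets B :: nat => real.\<close>

definition kpar :: "nat \<Rightarrow> nat" where
  "kpar n = nat \<lceil>8 * log 2 (real n)\<rceil>"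

definition vbar :: "(nat \<Rightarrow> real \<Rightarrow> real) \<Rightarrow> (nat \<Rightarrow> real) \<Rightarrow> nat \<Rightarrow> real \<Rightarrow> real" where
  "vbar v B i t = min (v i t) (B i)"

text \<open>Price curve of Sell-Without-r with c = vbar_r(1/2): on [(j-1)/(2k), j/(2k)) the price is
  2^j/8 * c, j = 1..k (the value at the single point 1/2 is irrelevant; set to the j = k value).\<close>
definition price :: "nat \<Rightarrow> real \<Rightarrow> real \<Rightarrow> real" where
  "price n c t = 2 ^ (min (nat \<lfloor>2 * real (kpar n) * t\<rfloor> + 1) (kpar n)) / 8 * c"

text \<open>(x, pi) is a possible outcome of Sell-Without-r, where the players other than r are
  processed in the order in which they appear in the list ord (a fixed order of all players).\<close>
definition sell_without ::
  "nat \<Rightarrow> (nat \<Rightarrow> real \<Rightarrow> real) \<Rightarrow> (nat \<Rightarrow> real) \<Rightarrow> nat list \<Rightarrow> nat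
    \<Rightarrow> (nat \<Rightarrow> real) \<Rightarrow> (nat \<Rightarrow> real) \<Rightarrow> bool" where
  "sell_without n v B ord r x pay \<longleftrightarrow>
     (let q = filter (\<lambda>i. i \<noteq> r) ord; p = price n (vbar v B r (1/2)) in
      \<forall>m < length q.
        (let i = q ! m; z = (\<Sum>l<m. x (q ! l)) in
          0 \<le> x i \<and> x i \<le> 1/2 - z \<and>
          pay i = integral {z..z + x i} p \<and> pay i \<le> B i \<and>
          (\<forall>a. 0 \<le> a \<and> a \<le> 1/2 - z \<and> integral {z..z + a} p \<le> B i \<longrightarrow>
               v i a - integral {z..z + a} p \<le> v i (x i) - pay i)))"

definition liquid_welfare :: "nat \<Rightarrow> (nat \<Rightarrow> real \<Rightarrow> real) \<Rightarrow> (nat \<Rightarrow> real) \<Rightarrow> (nat \<Rightarrow> real) \<Rightarrow> real" where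
  "liquid_welfare n v B y = (\<Sum>i<n. min (v i (y i)) (B i))"

definition opt_liquid_welfare :: "nat \<Rightarrow> (nat \<Rightarrow> real \<Rightarrow> real) \<Rightarrow> (nat \<Rightarrow> real) \<Rightarrow> real" where
  "opt_liquid_welfare n v B =
     Sup {liquid_welfare n v B y | y. (\<forall>i<n. 0 \<le> y i) \<and> (\<Sum>i<n. y i) = 1}"

definition ep_allocation ::
  "(nat \<Rightarrow> real \<Rightarrow> real) \<Rightarrow> (nat \<Rightarrow> real) \<Rightarrow> nat \<Rightarrow> nat
    \<Rightarrow> (nat \<Rightarrow> real) \<Rightarrow> (nat \<Rightarrow> real) \<Rightarrow> (nat \<Rightarrow> real) \<Rightarrow> nat \<Rightarrow> real" where
  "ep_allocation v B r1 r2 x x' pay' i =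
     (if i \<noteq> r1 then x i
      else if v r1 (x' r1) - pay' r1 \<ge> v r1 (1/2) - 2 * vbar v B r2 (1/2) then x' r1
      else 1/2)"

end

theory Submission
  imports Defs "HOL-Analysis.Harmonic_Numbers"
begin


lemma price_nonneg: "0 \<le> c \<Longrightarrow> 0 \<le> price n c t"
  unfolding price_def by simp

lemma price_lower:
  assumes "0 \<le> c" "1 \<le> kpar n" "0 \<le> t"
  shows "c / 4 \<le> price n c t"
proof -
  have e: "1 \<le> min (nat \<lfloor>2 * real (kpar n) * t\<rfloor> + 1) (kpar n)" using assms by simp
  have "(2::real) ^ 1 \<le> 2 ^ min (nat \<lfloor>2 * real (kpar n) * t\<rfloor> + 1) (kpar n)"
    by (rule power_increasing[OF e]) simp
  then show ?thesis unfolding price_def using assms(1)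
    by (simp add: mult_right_mono divide_right_mono)
qed

lemma price_mono:
  assumes "0 \<le> c" "0 \<le> t" "t \<le> t'"
  shows "price n c t \<le> price n c t'"
proof -
  have "\<lfloor>2 * real (kpar n) * t\<rfloor> \<le> \<lfloor>2 * real (kpar n) * t'\<rfloor>"
    by (rule floor_mono) (simp add: assms mult_left_mono)
  then have e: "min (nat \<lfloor>2 * real (kpar n) * t\<rfloor> + 1) (kpar n) \<le> min (nat \<lfloor>2 * real (kpar n) * t'\<rfloor> + 1) (kpar n)"
    by (simp add: nat_mono min.coboundedI1)
  have "(2::real) ^ min (nat \<lfloor>2 * real (kpar n) * t\<rfloor> + 1) (kpar n) \<le> 2 ^ min (nat \<lfloor>2 * real (kpar n) * t'\<rfloor> + 1) (kpar n)"
    by (rule power_increasing[OF e]) simp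
  then show ?thesis unfolding price_def using assms(1)
    by (simp add: mult_right_mono divide_right_mono)
qed

lemma price_mono_on: "0 \<le> c \<Longrightarrow> 0 \<le> a \<Longrightarrow> mono_on {a..b} (price n c)"
  by (auto intro!: mono_onI price_mono)

lemma price_integrable: "0 \<le> c \<Longrightarrow> 0 \<le> a \<Longrightarrow> price n c integrable_on {a..b}"
  by (rule integrable_on_mono_on, rule price_mono_on)

lemma price_step:
  assumes "0 \<le> c" "1 \<le> kpar n" "0 \<le> t"
  shows "price n c (t + 1 / (2 * real (kpar n))) \<le> 2 * price n c t"
proof -
  define k where "k = kpar n"
  have kp: "real k > 0" using assms by (simp add: k_def)
  have "2 * real k * (t + 1 / (2 * real k)) = 2 * real k * t + 1" using kp by (simp add: field_simps)
  then have fl: "\<lfloor>2 * real k * (t + 1 / (2 * real k))\<rfloor> = \<lfloor>2 * real k * t\<rfloor> + 1" by simp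
  have f0: "0 \<le> \<lfloor>2 * real k * t\<rfloor>" using assms kp by simp
  have e: "min (nat \<lfloor>2 * real k * (t + 1 / (2 * real k))\<rfloor> + 1) k \<le> min (nat \<lfloor>2 * real k * t\<rfloor> + 1) k + 1"
    using fl f0 by (simp add: nat_add_distrib)
  have "(2::real) ^ min (nat \<lfloor>2 * real k * (t + 1 / (2 * real k))\<rfloor> + 1) k \<le> 2 ^ (min (nat \<lfloor>2 * real k * t\<rfloor> + 1) k + 1)"
    by (rule power_increasing[OF e]) simp
  then show ?thesis unfolding price_def k_def[symmetric] using assms(1)
    by (simp add: mult_right_mono divide_right_mono) (metis mult.commute mult.left_commute mult_left_mono)
qed

lemma price_first:
  assumes "1 \<le> kpar n" "0 \<le> t" "t < 1 / (2 * real (kpar n))"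
  shows "price n c t = c / 4"
proof -
  have kp: "real (kpar n) > 0" using assms by simp
  have "2 * real (kpar n) * t < 1" using assms kp by (simp add: field_simps)
  then have "\<lfloor>2 * real (kpar n) * t\<rfloor> = 0" using assms kp by (simp add: floor_eq_iff)
  then show ?thesis unfolding price_def using assms by simp
qed

lemma price_last:
  assumes "1 \<le> kpar n" "t > 1/2 - 1 / (2 * real (kpar n))"
  shows "price n c t = 2 ^ kpar n / 8 * c"
proof -
  have kp: "real (kpar n) > 0" using assms by simp
  have "2 * real (kpar n) * t > real (kpar n) - 1" using assms kp by (simp add: field_simps)
  then have "\<lfloor>2 * real (kpar n) * t\<rfloor> \<ge> int (kpar n) - 1" by linarith
  then have "min (nat \<lfloor>2 * real (kpar n) * t\<rfloor> + 1) (kpar n) = kpar n" by linarith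
  then show ?thesis unfolding price_def by simp
qed



lemma int_le_const:
  fixes f :: "real \<Rightarrow> real"
  assumes "a \<le> b" "f integrable_on {a..b}" "\<And>t. t \<in> {a..b} \<Longrightarrow> f t \<le> M"
  shows "integral {a..b} f \<le> (b - a) * M"
proof -
  have "integral {a..b} f \<le> integral {a..b} (\<lambda>_. M)"
    by (rule integral_le) (use assms in auto)
  then show ?thesis using assms(1) by simp
qed

lemma int_ge_const:
  fixes f :: "real \<Rightarrow> real"
  assumes "a \<le> b" "f integrable_on {a..b}" "\<And>t. t \<in> {a..b} \<Longrightarrow> M \<le> f t"
  shows "(b - a) * M \<le> integral {a..b} f"
proof -
  have "integral {a..b} (\<lambda>_. M) \<le> integral {a..b} f"
    by (rule integral_le) (use assms in auto)
  then show ?thesis using assms(1) by simp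
qed

lemma conc_scale:
  fixes v :: "real \<Rightarrow> real"
  assumes "concave_on {0..1} v" "v 0 \<ge> 0" "0 \<le> th" "th \<le> 1" "0 \<le> t" "t \<le> 1"
  shows "th * v t \<le> v (th * t)"
proof -
  have "(1 - th) * v 0 + th * v t \<le> v ((1 - th) *\<^sub>R 0 + th *\<^sub>R t)"
    by (rule concave_onD[OF assms(1)]) (use assms in auto)
  then show ?thesis using assms by simp (smt (verit) mult_nonneg_nonneg)
qed

lemma conc_chord:
  fixes v :: "real \<Rightarrow> real"
  assumes "concave_on {0..1} v" "0 \<le> x" "x < a" "a \<le> y" "y \<le> 1"
  shows "(v y - v x) * (a - x) \<le> (v a - v x) * (y - x)"
proof -
  define th where "th = (a - x) / (y - x)"
  have yx: "y - x > 0" using assms by simp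
  have th0: "0 \<le> th" "th \<le> 1" using assms yx by (auto simp: th_def field_simps)
  have t1: "th * (y - x) = a - x" using yx by (simp add: th_def)
  have aeq: "(1 - th) *\<^sub>R x + th *\<^sub>R y = a" using t1 by (simp add: algebra_simps)
  have "(1 - th) * v x + th * v y \<le> v ((1 - th) *\<^sub>R x + th *\<^sub>R y)"
    by (rule concave_onD[OF assms(1)]) (use assms th0 in auto)
  then have "th * (v y - v x) \<le> v a - v x" using aeq by (simp add: algebra_simps)
  then have "(a - x) * (v y - v x) \<le> (v a - v x) * (y - x)"
    using yx by (simp add: th_def field_simps)
  then show ?thesis by (simp add: mult.commute)
qed

lemma vbar_le_two:
  fixes v :: "real \<Rightarrow> real"
  assumes "concave_on {0..1} v" "mono_on {0..1} v" "v 0 \<ge> 0" "0 \<le> y" "y \<le> 1" "0 < Bi"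
  shows "min (v y) Bi \<le> 2 * min (v (1/2)) Bi"
proof -
  have "1/2 * v 1 \<le> v (1/2 * 1)" by (rule conc_scale) (use assms in auto)
  moreover have "v y \<le> v 1" using assms by (auto intro: mono_onD)
  ultimately have "v y \<le> 2 * v (1/2)" by simp
  then show ?thesis using assms by linarith
qed



lemma dev:
  fixes v :: "real \<Rightarrow> real"
  assumes conc: "concave_on {0..1} v" and mon: "mono_on {0..1} v" and vnn: "\<forall>t\<in>{0..1}. 0 \<le> v t"
    and Bp: "0 < Bi" and c0: "0 \<le> c" and k1: "1 \<le> kpar n"
    and z0: "0 \<le> z" and x0: "0 \<le> x" and zxs: "z + x \<le> s" and sd: "s + 1 / (2 * real (kpar n)) \<le> 1/2"
    and payd: "pay = integral {z..z+x} (price n c)" and xle: "x \<le> 1/2 - z"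
    and opt: "\<forall>a. 0 \<le> a \<and> a \<le> 1/2 - z \<and> integral {z..z + a} (price n c) \<le> Bi \<longrightarrow>
               v a - integral {z..z + a} (price n c) \<le> v x - pay"
    and payB: "pay \<le> Bi" and y0: "0 \<le> y" and y1: "y \<le> 1"
  shows "min (v y) Bi \<le> min (v x) Bi + y * (2 * price n c s)"
proof -
  define P where "P = 2 * price n c s"
  define d where "d = 1 / (2 * real (kpar n))"
  have dp: "d > 0" using k1 by (simp add: d_def)
  have s0: "0 \<le> s" using z0 x0 zxs by linarith
  have P0: "0 \<le> P" using price_nonneg[OF c0] by (simp add: P_def)
  have "v 0 - integral {z..z + 0} (price n c) \<le> v x - pay"
    using opt[rule_format, of 0] z0 xle x0 Bp by auto
  moreover have "0 \<le> v 0" using vnn by auto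
  ultimately have payv: "pay \<le> v x" by simp
  have x1: "x \<le> 1" using xle z0 by linarith
  show ?thesis
  proof (cases "y \<le> x")
    case True
    have "v y \<le> v x" using True y0 x1 by (intro mono_onD[OF mon]) auto
    moreover have "0 \<le> y * P" using y0 P0 by simp
    ultimately show ?thesis unfolding P_def[symmetric] by linarith
  next
    case False
    define del where "del = min (y - x) d"
    have del0: "0 < del" using False dp by (simp add: del_def)
    have dely: "del \<le> y - x" "del \<le> d" by (auto simp: del_def)
    define a where "a = x + del"
    have a0: "0 \<le> a" "a \<le> 1/2 - z" using x0 del0 zxs sd dely unfolding a_def d_def by linarith+
    have ints: "integral {z..z+x} (price n c) + integral {z+x..z+a} (price n c) = integral {z..z+a} (price n c)"
      by (rule Henstock_Kurzweil_Integration.integral_combine) (use x0 del0 a_def z0 price_integrable[OF c0] in auto)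
    define E where "E = integral {z+x..z+a} (price n c)"
    have "E \<le> (z + a - (z + x)) * P" unfolding E_def
    proof (rule int_le_const)
      show "z + x \<le> z + a" using del0 a_def by simp
      show "price n c integrable_on {z + x..z + a}" using price_integrable[OF c0] z0 x0 by simp
      fix t assume t: "t \<in> {z + x..z + a}"
      have "price n c t \<le> price n c (s + d)"
        by (rule price_mono[OF c0]) (use t z0 x0 zxs dely a_def in auto)
      also have "\<dots> \<le> P" unfolding P_def d_def by (rule price_step[OF c0 k1 s0])
      finally show "price n c t \<le> P" .
    qed
    then have EP: "E \<le> del * P" by (simp add: a_def)
    have split: "integral {z..z+a} (price n c) = pay + E" using ints payd E_def by simp
    show ?thesis
    proof (cases "pay + E \<le> Bi")
      case True
      have "v a - (pay + E) \<le> v x - pay" using opt[rule_format, of a] a0 True split by auto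
      then have vax: "v a - v x \<le> del * P" using EP by linarith
      have "(v y - v x) * (a - x) \<le> (v a - v x) * (y - x)"
        by (rule conc_chord[OF conc]) (use x0 del0 dely y1 a_def in auto)
      also have "\<dots> \<le> (del * P) * (y - x)" using vax False by (intro mult_right_mono) auto
      finally have "(v y - v x) * del \<le> (P * (y - x)) * del" by (simp add: a_def algebra_simps)
      then have "v y - v x \<le> P * (y - x)" using del0 by simp
      also have "\<dots> \<le> y * P" using P0 x0 by (simp add: algebra_simps mult_left_mono)
      finally have "v y - v x \<le> y * P" .
      moreover have "0 \<le> y * P" using y0 P0 by simp
      ultimately show ?thesis unfolding P_def[symmetric] by linarith
    next
      case False
      have "del * P \<le> y * P" using dely x0 P0 by (intro mult_right_mono) auto
      then show ?thesis unfolding P_def[symmetric] using False EP payv payB by linarith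
    qed
  qed
qed



lemma sw_unfold:
  assumes "sell_without n v B ord r x pay" "m < length (filter (\<lambda>i. i \<noteq> r) ord)"
  shows "0 \<le> x (filter (\<lambda>i. i \<noteq> r) ord ! m)"
    "x (filter (\<lambda>i. i \<noteq> r) ord ! m) \<le> 1/2 - (\<Sum>l<m. x (filter (\<lambda>i. i \<noteq> r) ord ! l))"
    "pay (filter (\<lambda>i. i \<noteq> r) ord ! m) = integral {(\<Sum>l<m. x (filter (\<lambda>i. i \<noteq> r) ord ! l))..(\<Sum>l<m. x (filter (\<lambda>i. i \<noteq> r) ord ! l)) + x (filter (\<lambda>i. i \<noteq> r) ord ! m)} (price n (vbar v B r (1/2)))"
    "pay (filter (\<lambda>i. i \<noteq> r) ord ! m) \<le> B (filter (\<lambda>i. i \<noteq> r) ord ! m)"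
    "\<forall>a. 0 \<le> a \<and> a \<le> 1/2 - (\<Sum>l<m. x (filter (\<lambda>i. i \<noteq> r) ord ! l)) \<and> integral {(\<Sum>l<m. x (filter (\<lambda>i. i \<noteq> r) ord ! l))..(\<Sum>l<m. x (filter (\<lambda>i. i \<noteq> r) ord ! l)) + a} (price n (vbar v B r (1/2))) \<le> B (filter (\<lambda>i. i \<noteq> r) ord ! m) \<longrightarrow>
               v (filter (\<lambda>i. i \<noteq> r) ord ! m) a - integral {(\<Sum>l<m. x (filter (\<lambda>i. i \<noteq> r) ord ! l))..(\<Sum>l<m. x (filter (\<lambda>i. i \<noteq> r) ord ! l)) + a} (price n (vbar v B r (1/2))) \<le> v (filter (\<lambda>i. i \<noteq> r) ord ! m) (x (filter (\<lambda>i. i \<noteq> r) ord ! m)) - pay (filter (\<lambda>i. i \<noteq> r) ord ! m)"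
  using assms unfolding sell_without_def Let_def by auto

lemma sw_tele:
  assumes "sell_without n v B ord r x pay" "0 \<le> vbar v B r (1/2)"
    "m \<le> length (filter (\<lambda>i. i \<noteq> r) ord)"
  shows "(\<Sum>l<m. pay (filter (\<lambda>i. i \<noteq> r) ord ! l)) = integral {0..(\<Sum>l<m. x (filter (\<lambda>i. i \<noteq> r) ord ! l))} (price n (vbar v B r (1/2)))
     \<and> 0 \<le> (\<Sum>l<m. x (filter (\<lambda>i. i \<noteq> r) ord ! l))"
  using assms(3)
proof (induction m)
  case 0
  then show ?case by simp
next
  case (Suc m)
  let ?Q = "filter (\<lambda>i. i \<noteq> r) ord"
  let ?z = "\<Sum>l<m. x (?Q ! l)"
  let ?p = "price n (vbar v B r (1/2))"
  have ml: "m < length ?Q" using Suc.prems by simp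
  have IH: "(\<Sum>l<m. pay (?Q ! l)) = integral {0..?z} ?p" "0 \<le> ?z" using Suc.IH Suc.prems by auto
  have x0: "0 \<le> x (?Q ! m)" by (rule sw_unfold(1)[OF assms(1) ml])
  have pe: "pay (?Q ! m) = integral {?z..?z + x (?Q ! m)} ?p" by (rule sw_unfold(3)[OF assms(1) ml])
  have "integral {0..?z} ?p + integral {?z..?z + x (?Q ! m)} ?p = integral {0..?z + x (?Q ! m)} ?p"
    by (rule Henstock_Kurzweil_Integration.integral_combine) (use IH x0 price_integrable[OF assms(2)] in auto)
  then show ?case using IH x0 pe by simp
qed

lemma sw_pay_le:
  assumes "sell_without n v B ord r x pay" "m < length (filter (\<lambda>i. i \<noteq> r) ord)"
    "0 \<le> v (filter (\<lambda>i. i \<noteq> r) ord ! m) 0" "0 \<le> B (filter (\<lambda>i. i \<noteq> r) ord ! m)"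
  shows "pay (filter (\<lambda>i. i \<noteq> r) ord ! m) \<le> min (v (filter (\<lambda>i. i \<noteq> r) ord ! m) (x (filter (\<lambda>i. i \<noteq> r) ord ! m))) (B (filter (\<lambda>i. i \<noteq> r) ord ! m))"
proof -
  let ?Q = "filter (\<lambda>i. i \<noteq> r) ord"
  let ?z = "\<Sum>l<m. x (?Q ! l)"
  have x0: "0 \<le> x (?Q ! m)" "x (?Q ! m) \<le> 1/2 - ?z" by (rule sw_unfold[OF assms(1,2)])+
  have "0 \<le> 1/2 - ?z" using x0 by linarith
  then have "v (?Q ! m) 0 - 0 \<le> v (?Q ! m) (x (?Q ! m)) - pay (?Q ! m)"
    using sw_unfold(5)[OF assms(1,2), rule_format, of 0] assms(3,4) by auto
  then show ?thesis using sw_unfold(4)[OF assms(1,2)] assms(3) by simp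
qed



lemma int_price_nonneg:
  assumes "0 \<le> c" "0 \<le> a" "a \<le> b"
  shows "0 \<le> integral {a..b} (price n c)"
  using int_ge_const[of a b "price n c" 0] assms price_integrable[OF assms(1,2)] price_nonneg[OF assms(1)]
  by simp

lemma r2_lb:
  assumes sw: "sell_without n v B ord r x pay"
    and c0: "0 \<le> vbar v B r (1/2)" and k1: "1 \<le> kpar n"
    and ml: "m < length (filter (\<lambda>i. i \<noteq> r) ord)"
    and conc: "concave_on {0..1} (v (filter (\<lambda>i. i \<noteq> r) ord ! m))"
    and vnn: "\<forall>t\<in>{0..1}. 0 \<le> v (filter (\<lambda>i. i \<noteq> r) ord ! m) t"
    and Bp: "0 < B (filter (\<lambda>i. i \<noteq> r) ord ! m)"
    and cc: "vbar v B r (1/2) \<le> 4 * vbar v B (filter (\<lambda>i. i \<noteq> r) ord ! m) (1/2)"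
  shows "vbar v B r (1/2) / (8 * real (kpar n)) \<le> (\<Sum>l<m. pay (filter (\<lambda>i. i \<noteq> r) ord ! l))
          + min (v (filter (\<lambda>i. i \<noteq> r) ord ! m) (x (filter (\<lambda>i. i \<noteq> r) ord ! m))) (B (filter (\<lambda>i. i \<noteq> r) ord ! m))"
proof -
  let ?Q = "filter (\<lambda>i. i \<noteq> r) ord"
  define j where "j = ?Q ! m"
  define z where "z = (\<Sum>l<m. x (?Q ! l))"
  define c where "c = vbar v B r (1/2)"
  define d where "d = 1 / (2 * real (kpar n))"
  define p where "p = price n c"
  have dp: "0 < d" "d \<le> 1/2" using k1 by (auto simp: d_def field_simps)
  have cd: "c / (8 * real (kpar n)) = d * (c / 4)" by (simp add: d_def c_def)
  have c0': "0 \<le> c" using c0 by (simp add: c_def)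
  have tl: "(\<Sum>l<m. pay (?Q ! l)) = integral {0..z} p" "0 \<le> z"
    using sw_tele[OF sw c0, of m] ml by (auto simp: z_def p_def c_def)
  have x0: "0 \<le> x j" "x j \<le> 1/2 - z" using sw_unfold(1,2)[OF sw ml] by (auto simp: j_def z_def)
  have pe: "pay j = integral {z..z + x j} p" using sw_unfold(3)[OF sw ml] by (simp add: j_def z_def p_def c_def)
  have opt: "\<And>a. 0 \<le> a \<Longrightarrow> a \<le> 1/2 - z \<Longrightarrow> integral {z..z + a} p \<le> B j \<Longrightarrow>
               v j a - integral {z..z + a} p \<le> v j (x j) - pay j"
    using sw_unfold(5)[OF sw ml] by (auto simp: j_def z_def p_def c_def)
  have Rz: "z * (c / 4) \<le> integral {0..z} p"
    using int_ge_const[of 0 z p "c/4"] tl(2) price_integrable[OF c0', where a=0 and b=z and n=n] price_lower[OF c0' k1]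
    by (simp add: p_def)
  have vx0: "0 \<le> v j (x j)" using vnn x0 tl(2) by (auto simp: j_def)
  have mn0: "0 \<le> min (v j (x j)) (B j)" using vx0 Bp by (simp add: j_def)
  show ?thesis
  proof (cases "d \<le> z")
    case True
    have "d * (c / 4) \<le> z * (c / 4)" using True c0' by (intro mult_right_mono) auto
    then show ?thesis using cd tl Rz mn0 unfolding c_def j_def by linarith
  next
    case False
    define a where "a = d - z"
    have a0: "0 < a" "a \<le> 1/2 - z" "a \<le> 1/2" using False dp tl(2) by (auto simp: a_def)
    have "integral {z..z + a} p = integral {z..z + a} (\<lambda>_. c / 4)"
    proof (rule integral_spike[of "{d}"])
      show "negligible {d}" by auto
      fix t assume "t \<in> {z..z + a} - {d}"
      then have "0 \<le> t" "t < d" using tl(2) by (auto simp: a_def)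
      then show "c / 4 = p t" unfolding p_def using price_first[OF k1, of t c] by (simp add: d_def)
    qed
    then have ia: "integral {z..z + a} p = a * (c / 4)" using a0 by simp
    have c2: "c / 4 \<le> vbar v B j (1/2)" using cc by (simp add: c_def j_def)
    have "a * (c / 4) \<le> 1 * (c / 4)" using a0 c0' by (intro mult_right_mono) auto
    also have "\<dots> \<le> B j" using c2 by (simp add: vbar_def)
    finally have aB: "a * (c / 4) \<le> B j" by simp
    have pay0: "0 \<le> pay j" unfolding pe p_def using int_price_nonneg[OF c0'] tl(2) x0 by simp
    have "v j a - a * (c / 4) \<le> v j (x j) - pay j" using opt[of a] a0 ia aB by simp
    moreover have "(2 * a) * v j (1/2) \<le> v j ((2 * a) * (1/2))"
      by (rule conc_scale) (use conc vnn a0 in \<open>auto simp: j_def\<close>)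
    moreover have "(2 * a) * (c / 4) \<le> (2 * a) * v j (1/2)"
      using c2 a0 by (intro mult_left_mono) (auto simp: vbar_def)
    ultimately have "a * (c / 4) \<le> v j (x j)" using pay0 by simp
    then have "a * (c / 4) \<le> min (v j (x j)) (B j)" using aB by simp
    moreover have "d * (c / 4) = z * (c / 4) + a * (c / 4)" by (simp add: a_def field_simps)
    ultimately show ?thesis using cd tl Rz unfolding c_def j_def by linarith
  qed
qed



lemma sum_list_idx:
  assumes "distinct Q"
  shows "(\<Sum>i\<in>set Q. f i) = (\<Sum>l<length Q. f (Q ! l))"
proof -
  have "(\<Sum>i\<in>set Q. f i) = sum_list (map f Q)" using sum_list_distinct_conv_sum_set[OF assms, of f] by simp
  also have "\<dots> = (\<Sum>l = 0..<length Q. map f Q ! l)" using sum_list_sum_nth[of "map f Q"] by simp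
  also have "\<dots> = (\<Sum>l<length Q. f (Q ! l))" by (simp add: atLeast0LessThan)
  finally show ?thesis .
qed

lemma kpar_bounds:
  assumes "2 \<le> n"
  shows "1 \<le> kpar n" "real n \<le> 2 ^ kpar n" "real (kpar n) \<le> 14 * ln (real n)"
proof -
  have n2: "2 \<le> real n" using assms by simp
  have l1: "1 \<le> log 2 (real n)" using n2 by simp
  have ck: "real (kpar n) = real_of_int \<lceil>8 * log 2 (real n)\<rceil>"
    unfolding kpar_def using l1 by simp
  have kge: "8 * log 2 (real n) \<le> real (kpar n)" using ck by linarith
  then show "1 \<le> kpar n" using l1 by simp
  have "real n = 2 powr (log 2 (real n))" using n2 by simp
  also have "\<dots> \<le> 2 powr (real (kpar n))" using kge l1 by (intro powr_mono) auto
  also have "\<dots> = 2 ^ kpar n" by (simp add: powr_realpow)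
  finally show "real n \<le> 2 ^ kpar n" .
  have kle: "real (kpar n) \<le> 8 * log 2 (real n) + 1" using ck by linarith
  have ln2: "2/3 \<le> ln (2::real)" by (rule ln2_ge_two_thirds)
  have lnn: "ln 2 \<le> ln (real n)" using n2 by simp
  have "log 2 (real n) = ln (real n) / ln 2" by (simp add: log_def)
  also have "\<dots> \<le> ln (real n) / (2/3)" using ln2 lnn by (intro divide_left_mono) auto
  finally have "log 2 (real n) \<le> 3/2 * ln (real n)" by simp
  then show "real (kpar n) \<le> 14 * ln (real n)" using kle ln2 lnn by linarith
qed

lemma price_rev:
  assumes c0: "0 \<le> c" and k1: "1 \<le> kpar n" and s0: "0 \<le> s"
  shows "price n c s \<le> 4 * real (kpar n) * integral {0..s} (price n c) + c / 4"
proof -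
  define d where "d = 1 / (2 * real (kpar n))"
  have dp: "0 < d" using k1 by (simp add: d_def)
  have I0: "0 \<le> integral {0..s} (price n c)" using int_price_nonneg[OF c0] s0 by simp
  have k0: "0 \<le> real (kpar n)" by simp
  show ?thesis
  proof (cases "s < d")
    case True
    then have "price n c s = c / 4" using price_first[OF k1 s0] by (simp add: d_def)
    moreover have "0 \<le> 4 * real (kpar n) * integral {0..s} (price n c)" using I0 k0 by simp
    ultimately show ?thesis by linarith
  next
    case False
    have sd: "0 \<le> s - d" using False by simp
    have "integral {0..s - d} (price n c) + integral {s - d..s} (price n c) = integral {0..s} (price n c)"
      by (rule Henstock_Kurzweil_Integration.integral_combine) (use sd dp price_integrable[OF c0] in auto)
    moreover have "0 \<le> integral {0..s - d} (price n c)" using int_price_nonneg[OF c0] sd by simp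
    moreover have "d * price n c (s - d) \<le> integral {s - d..s} (price n c)"
    proof -
      have "(s - (s - d)) * price n c (s - d) \<le> integral {s - d..s} (price n c)"
      proof (rule int_ge_const)
        show "s - d \<le> s" using dp by simp
        show "price n c integrable_on {s - d..s}" using price_integrable[OF c0 sd] .
        fix t assume "t \<in> {s - d..s}"
        then show "price n c (s - d) \<le> price n c t" using price_mono[OF c0 sd] by auto
      qed
      then show ?thesis by simp
    qed
    moreover have "price n c s \<le> 2 * price n c (s - d)"
      using price_step[OF c0 k1 sd] by (simp add: d_def)
    moreover have "d * price n c s \<le> d * (2 * price n c (s - d))"
      using dp \<open>price n c s \<le> 2 * price n c (s - d)\<close> by (intro mult_left_mono) auto
    ultimately have "d * price n c s \<le> 2 * integral {0..s} (price n c)"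
      by linarith
    then have "price n c s \<le> 2 * integral {0..s} (price n c) / d" using dp by (simp add: field_simps)
    also have "\<dots> = 4 * real (kpar n) * integral {0..s} (price n c)" by (simp add: d_def)
    finally show ?thesis using c0 by simp
  qed
qed



lemma main_bound:
  fixes n :: nat and v :: "nat \<Rightarrow> real \<Rightarrow> real" and B :: "nat \<Rightarrow> real" and ord :: "nat list"
    and r1 r2 :: nat and x pay x' pay' :: "nat \<Rightarrow> real"
  assumes n2: "n \<ge> 2"
    and vass: "\<forall>i<n. concave_on {0..1} (v i) \<and> mono_on {0..1} (v i) \<and> (\<forall>t\<in>{0..1}. 0 \<le> v i t)"
    and Bpos: "\<forall>i<n. 0 < B i"
    and dord: "distinct ord" and sord: "set ord = {..<n}"
    and r1n: "r1 < n" and r1max: "\<forall>i<n. vbar v B i (1/2) \<le> vbar v B r1 (1/2)"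
    and r2n: "r2 < n" and r21: "r2 \<noteq> r1" and r2max: "\<forall>i<n. i \<noteq> r1 \<longrightarrow> vbar v B i (1/2) \<le> vbar v B r2 (1/2)"
    and sw1: "sell_without n v B ord r1 x pay"
    and sw2: "sell_without n v B ord r2 x' pay'"
  shows "opt_liquid_welfare n v B \<le> 128 * real (kpar n) * liquid_welfare n v B (ep_allocation v B r1 r2 x x' pay')
    \<and> 0 \<le> liquid_welfare n v B (ep_allocation v B r1 r2 x x' pay')"
proof -
  define Q where "Q = filter (\<lambda>i. i \<noteq> r1) ord"
  define L where "L = length Q"
  define c where "c = vbar v B r1 (1/2)"
  define k where "k = kpar n"
  define p where "p = price n c"
  define s where "s = (\<Sum>l<L. x (Q ! l))"
  define R where "R = (\<Sum>l<L. pay (Q ! l))"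
  define Wo where "Wo = (\<Sum>l<L. min (v (Q ! l) (x (Q ! l))) (B (Q ! l)))"
  define al where "al = ep_allocation v B r1 r2 x x' pay'"
  define W where "W = liquid_welfare n v B al"
  have k1: "1 \<le> k" and kn: "real n \<le> 2 ^ k" using kpar_bounds[OF n2] by (auto simp: k_def)
  have vi: "\<And>i. i < n \<Longrightarrow> concave_on {0..1} (v i) \<and> mono_on {0..1} (v i) \<and> (\<forall>t\<in>{0..1}. 0 \<le> v i t)"
    using vass by auto
  have v00: "\<And>i. i < n \<Longrightarrow> 0 \<le> v i 0" using vi by auto
  have c0: "0 \<le> c" unfolding c_def vbar_def using vi[OF r1n] Bpos r1n by auto
  have dQ: "distinct Q" using dord by (simp add: Q_def)
  have sQ: "set Q = {..<n} - {r1}" using sord by (auto simp: Q_def)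
  have Qn: "Q ! l < n \<and> Q ! l \<noteq> r1" if l: "l < L" for l
  proof -
    have "Q ! l \<in> set Q" using l nth_mem unfolding L_def by blast
    then show ?thesis unfolding sQ by simp
  qed
  have tl: "R = integral {0..s} p" "0 \<le> s"
    using sw_tele[OF sw1, of L] c0 by (auto simp: R_def s_def p_def c_def Q_def L_def)
  have xnn: "\<And>l. l < L \<Longrightarrow> 0 \<le> x (Q ! l)" using sw_unfold(1)[OF sw1] by (simp add: Q_def L_def)
  have paynn: "\<And>l. l < L \<Longrightarrow> 0 \<le> pay (Q ! l)"
  proof -
    fix l assume l: "l < L"
    have "0 \<le> (\<Sum>m<l. x (Q ! m))" using sw_tele[OF sw1, of l] c0 l by (simp add: Q_def L_def c_def)
    then show "0 \<le> pay (Q ! l)" using sw_unfold(3)[OF sw1] l xnn[OF l] int_price_nonneg[OF c0]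
      by (simp add: Q_def L_def c_def)
  qed
  have payle: "\<And>l. l < L \<Longrightarrow> pay (Q ! l) \<le> min (v (Q ! l) (x (Q ! l))) (B (Q ! l))"
    using sw_pay_le[OF sw1] v00 Bpos Qn by (simp add: Q_def L_def less_imp_le)
  have RW: "R \<le> Wo" unfolding R_def Wo_def by (rule sum_mono) (use payle in auto)
  have "0 \<le> R" unfolding R_def by (rule sum_nonneg) (use paynn in auto)
  then have Wo0: "0 \<le> Wo" using RW by linarith
  have Wsplit: "W = min (v r1 (al r1)) (B r1) + Wo"
  proof -
    have "W = min (v r1 (al r1)) (B r1) + (\<Sum>i\<in>{..<n} - {r1}. min (v i (al i)) (B i))"
      unfolding W_def liquid_welfare_def using r1n by (simp add: sum.remove)
    also have "(\<Sum>i\<in>{..<n} - {r1}. min (v i (al i)) (B i)) = (\<Sum>i\<in>set Q. min (v i (x i)) (B i))"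
      unfolding sQ by (rule sum.cong) (auto simp: al_def ep_allocation_def)
    also have "\<dots> = Wo" unfolding Wo_def L_def by (rule sum_list_idx[OF dQ])
    finally show ?thesis .
  qed
  define Q' where "Q' = filter (\<lambda>i. i \<noteq> r2) ord"
  have r1Q': "r1 \<in> set Q'" using r21 r1n sord by (auto simp: Q'_def)
  then obtain m' where m': "m' < length Q'" "Q' ! m' = r1" by (auto simp: in_set_conv_nth)
  have c2nn: "0 \<le> vbar v B r2 (1/2)" unfolding vbar_def using vi[OF r2n] Bpos r2n by auto
  have z'0: "0 \<le> (\<Sum>l<m'. x' (Q' ! l))" using sw_tele[OF sw2 c2nn, of m'] m' by (simp add: Q'_def)
  have x'r1: "0 \<le> x' r1" "x' r1 \<le> 1/2" using sw_unfold(1,2)[OF sw2, of m'] m' z'0 by (auto simp: Q'_def)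
  have pay'0: "0 \<le> pay' r1" using sw_unfold(3)[OF sw2, of m'] m' z'0 x'r1 int_price_nonneg[OF c2nn]
    by (simp add: Q'_def)
  have al1: "0 \<le> al r1" "al r1 \<le> 1" using x'r1 by (auto simp: al_def ep_allocation_def)
  have t1nn: "0 \<le> min (v r1 (al r1)) (B r1)" using vi[OF r1n] al1 Bpos r1n by auto
  have WWo: "Wo \<le> W" "0 \<le> W" using Wsplit t1nn Wo0 by auto
  have cW: "c \<le> 16 * real k * W"
  proof -
    have k1r: "1 \<le> real k" using k1 by simp
    have "c / (16 * real k) \<le> W"
    proof (cases "v r1 (x' r1) - pay' r1 \<ge> v r1 (1/2) - 2 * vbar v B r2 (1/2)")
      case False
      then have alh: "al r1 = 1/2" by (simp add: al_def ep_allocation_def)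
      have "min (v r1 (al r1)) (B r1) = c" unfolding c_def vbar_def alh by (rule refl)
      then have "c \<le> W" using Wsplit Wo0 by linarith
      moreover have "c / (16 * real k) \<le> c / 1" using c0 k1r by (intro divide_left_mono) auto
      ultimately show ?thesis by linarith
    next
      case True
      then have alx: "al r1 = x' r1" by (simp add: al_def ep_allocation_def)
      show ?thesis
      proof (cases "4 * vbar v B r2 (1/2) \<le> v r1 (1/2)")
        case True2: True
        have "c \<le> v r1 (1/2)" "c \<le> B r1" by (auto simp: c_def vbar_def)
        then have "c / 2 \<le> min (v r1 (al r1)) (B r1)" using True True2 pay'0 alx c0 by auto
        moreover have "c / (16 * real k) \<le> c / 2" using c0 k1r by (intro divide_left_mono) auto
        ultimately show ?thesis using Wsplit Wo0 by linarith
      next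
        case False2: False
        have "c \<le> v r1 (1/2)" by (auto simp: c_def vbar_def)
        then have cc: "c \<le> 4 * vbar v B r2 (1/2)" using False2 by linarith
        have r2Q: "r2 \<in> set Q" using r21 r2n sord by (auto simp: Q_def)
        then obtain m where m: "m < L" "Q ! m = r2" by (auto simp: in_set_conv_nth L_def)
        have lb: "c / (8 * real k) \<le> (\<Sum>l<m. pay (Q ! l)) + min (v (Q ! m) (x (Q ! m))) (B (Q ! m))"
          using r2_lb[OF sw1 _ _ , of m] c0 k1 m vi[OF r2n] Bpos r2n cc
          by (simp add: Q_def L_def c_def k_def)
        have "(\<Sum>l<m. pay (Q ! l)) \<le> R" unfolding R_def
          by (rule sum_mono2) (use m paynn in auto)
        moreover have "min (v (Q ! m) (x (Q ! m))) (B (Q ! m)) \<le> Wo" unfolding Wo_def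
        proof (rule member_le_sum)
          show "m \<in> {..<L}" using m by simp
          show "finite {..<L}" by simp
          fix l assume "l \<in> {..<L} - {m}"
          then have "l < L" by simp
          then show "0 \<le> min (v (Q ! l) (x (Q ! l))) (B (Q ! l))" using payle paynn by (meson order_trans)
        qed
        ultimately have "c / (8 * real k) \<le> 2 * W" using lb RW WWo by linarith
        then show ?thesis using k1r by (simp add: field_simps)
      qed
    qed
    then show ?thesis using k1r by (simp add: field_simps)
  qed
  have ps: "p s \<le> 4 * real k * R + c / 4" using price_rev[OF c0 _ tl(2), of n] k1 tl(1)
    by (simp add: p_def k_def)
  have ps0: "0 \<le> p s" unfolding p_def by (rule price_nonneg[OF c0])
  have bound: "liquid_welfare n v B y \<le> 128 * real k * W"
    if y0: "\<forall>i<n. 0 \<le> y i" and y1: "(\<Sum>i<n. y i) = 1" for y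
  proof -
    have yle: "y i \<le> 1" if i: "i < n" for i
    proof -
      have "y i \<le> (\<Sum>i<n. y i)"
        by (rule member_le_sum) (use i y0 in auto)
      then show ?thesis using y1 by simp
    qed
    have tb: "\<And>i. i < n \<Longrightarrow> min (v i (y i)) (B i) \<le> 2 * c"
    proof -
      fix i assume i: "i < n"
      have "min (v i (y i)) (B i) \<le> 2 * vbar v B i (1/2)"
        unfolding vbar_def by (rule vbar_le_two) (use vi[OF i] y0 yle[OF i] Bpos i in auto)
      moreover have "vbar v B i (1/2) \<le> c" using r1max i by (simp add: c_def)
      ultimately show "min (v i (y i)) (B i) \<le> 2 * c" by linarith
    qed
    have ysplit: "liquid_welfare n v B y = min (v r1 (y r1)) (B r1) + (\<Sum>l<L. min (v (Q ! l) (y (Q ! l))) (B (Q ! l)))"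
    proof -
      have "liquid_welfare n v B y = min (v r1 (y r1)) (B r1) + (\<Sum>i\<in>{..<n} - {r1}. min (v i (y i)) (B i))"
        unfolding liquid_welfare_def using r1n by (simp add: sum.remove)
      also have "(\<Sum>i\<in>{..<n} - {r1}. min (v i (y i)) (B i)) = (\<Sum>l<L. min (v (Q ! l) (y (Q ! l))) (B (Q ! l)))"
        unfolding sQ[symmetric] L_def by (rule sum_list_idx[OF dQ])
      finally show ?thesis .
    qed
    have ysum: "(\<Sum>l<L. y (Q ! l)) \<le> 1"
    proof -
      have "(\<Sum>l<L. y (Q ! l)) = (\<Sum>i\<in>set Q. y i)" unfolding L_def by (rule sum_list_idx[OF dQ, symmetric])
      also have "\<dots> \<le> (\<Sum>i<n. y i)" unfolding sQ by (rule sum_mono2) (use y0 in auto)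
      finally show ?thesis using y1 by simp
    qed
    show ?thesis
    proof (cases "s + 1 / (2 * real k) \<le> 1/2")
      case True
      have each: "min (v (Q ! l) (y (Q ! l))) (B (Q ! l)) \<le> min (v (Q ! l) (x (Q ! l))) (B (Q ! l)) + y (Q ! l) * (2 * p s)"
        if l: "l < L" for l
      proof -
        have ln: "Q ! l < n" using Qn[OF l] by simp
        have zx: "(\<Sum>m<l. x (Q ! m)) + x (Q ! l) \<le> s"
        proof -
          have "(\<Sum>m<l. x (Q ! m)) + x (Q ! l) = (\<Sum>m<Suc l. x (Q ! m))" by simp
          also have "\<dots> \<le> s" unfolding s_def by (rule sum_mono2) (use l xnn in auto)
          finally show ?thesis .
        qed
        have z0: "0 \<le> (\<Sum>m<l. x (Q ! m))" by (rule sum_nonneg) (use l xnn in auto)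
        show ?thesis unfolding p_def
        proof (rule dev)
          show "concave_on {0..1} (v (Q ! l))" "mono_on {0..1} (v (Q ! l))" "\<forall>t\<in>{0..1}. 0 \<le> v (Q ! l) t"
            using vi[OF ln] by auto
          show "0 < B (Q ! l)" using Bpos ln by auto
          show "0 \<le> c" by (rule c0)
          show "1 \<le> kpar n" using k1 by (simp add: k_def)
          show "0 \<le> (\<Sum>m<l. x (Q ! m))" by (rule z0)
          show "0 \<le> x (Q ! l)" using xnn[OF l] .
          show "(\<Sum>m<l. x (Q ! m)) + x (Q ! l) \<le> s" by (rule zx)
          show "s + 1 / (2 * real (kpar n)) \<le> 1/2" using True by (simp add: k_def)
          show "pay (Q ! l) = integral {(\<Sum>m<l. x (Q ! m))..(\<Sum>m<l. x (Q ! m)) + x (Q ! l)} (price n c)"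
            using sw_unfold(3)[OF sw1] l by (simp add: Q_def L_def c_def)
          show "x (Q ! l) \<le> 1/2 - (\<Sum>m<l. x (Q ! m))"
            using sw_unfold(2)[OF sw1] l by (simp add: Q_def L_def)
          show "\<forall>a. 0 \<le> a \<and> a \<le> 1/2 - (\<Sum>m<l. x (Q ! m)) \<and> integral {(\<Sum>m<l. x (Q ! m))..(\<Sum>m<l. x (Q ! m)) + a} (price n c) \<le> B (Q ! l) \<longrightarrow>
               v (Q ! l) a - integral {(\<Sum>m<l. x (Q ! m))..(\<Sum>m<l. x (Q ! m)) + a} (price n c) \<le> v (Q ! l) (x (Q ! l)) - pay (Q ! l)"
            using sw_unfold(5)[OF sw1] l by (simp add: Q_def L_def c_def)
          show "pay (Q ! l) \<le> B (Q ! l)" using sw_unfold(4)[OF sw1] l by (simp add: Q_def L_def)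
          show "0 \<le> y (Q ! l)" using y0 ln by auto
          show "y (Q ! l) \<le> 1" using yle ln by auto
        qed
      qed
      have "(\<Sum>l<L. min (v (Q ! l) (y (Q ! l))) (B (Q ! l))) \<le> (\<Sum>l<L. min (v (Q ! l) (x (Q ! l))) (B (Q ! l)) + y (Q ! l) * (2 * p s))"
        by (rule sum_mono) (use each in auto)
      also have "\<dots> = Wo + (\<Sum>l<L. y (Q ! l)) * (2 * p s)" by (simp add: Wo_def sum.distrib sum_distrib_right)
      also have "\<dots> \<le> Wo + 1 * (2 * p s)" using ysum ps0 by (intro add_left_mono mult_right_mono) auto
      finally have A: "(\<Sum>l<L. min (v (Q ! l) (y (Q ! l))) (B (Q ! l))) \<le> Wo + 2 * p s" by simp
      define T where "T = 4 * real k * R + c / 4"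
      have psT: "p s \<le> T" using ps by (simp add: T_def)
      have "liquid_welfare n v B y \<le> 2 * c + W + 2 * T"
        using ysplit A tb[OF r1n] WWo psT by linarith
      also have "\<dots> = 2 * c + W + 2 * (4 * real k * R + c / 4)" by (simp add: T_def)
      also have "\<dots> \<le> 40 * real k * W + W + 8 * real k * W"
      proof -
        have a: "real k * R \<le> real k * W" using RW WWo by (intro mult_left_mono) auto
        have e1: "2 * c + W + 2 * (4 * real k * R + c / 4) = 5/2 * c + W + 8 * (real k * R)" by (simp add: algebra_simps)
        have e2: "40 * real k * W + W + 8 * real k * W = 48 * (real k * W) + W" by (simp add: algebra_simps)
        have cc: "c \<le> 16 * (real k * W)" using cW by (simp add: mult.assoc)
        show ?thesis unfolding e1 e2 using a cc by linarith
      qed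
      also have "\<dots> \<le> 128 * real k * W"
      proof -
        have a: "1 * W \<le> real k * W" using k1 WWo by (intro mult_right_mono) auto
        have e2: "40 * real k * W + W + 8 * real k * W = 48 * (real k * W) + W" by (simp add: algebra_simps)
        have e3: "128 * real k * W = 128 * (real k * W)" by simp
        have "0 \<le> real k * W" using WWo by simp
        then show ?thesis unfolding e2 e3 using a by linarith
      qed
      finally show ?thesis .
    next
      case False
      have F: "s > 1/2 - 1 / (2 * real (kpar n))" using False unfolding k_def by linarith
      have k1': "1 \<le> kpar n" using k1 unfolding k_def .
      have pe: "p s = 2 ^ k / 8 * c" unfolding p_def k_def by (rule price_last[OF k1' F])
      have nk: "real n * c \<le> 2 ^ k * c" by (rule mult_right_mono[OF kn c0])
      have "real n * c / 8 \<le> 2 ^ k * c / 8" using nk by (rule divide_right_mono) simp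
      also have "\<dots> = p s" using pe by simp
      finally have "real n * c / 8 \<le> p s" .
      have "liquid_welfare n v B y \<le> (\<Sum>i<n. 2 * c)" unfolding liquid_welfare_def
        by (rule sum_mono) (use tb in auto)
      also have "\<dots> = 2 * real n * c" by simp
      also have "\<dots> \<le> 16 * p s" using \<open>real n * c / 8 \<le> p s\<close> by (simp add: mult.commute)
      also have "\<dots> \<le> 64 * real k * R + 4 * c" using ps by simp
      also have "\<dots> \<le> 128 * real k * W"
      proof -
        have a: "real k * R \<le> real k * W" using RW WWo by (intro mult_left_mono) auto
        have e1: "64 * real k * R + 4 * c = 64 * (real k * R) + 4 * c" by simp
        have e3: "128 * real k * W = 128 * (real k * W)" by simp
        have cc: "c \<le> 16 * (real k * W)" using cW by (simp add: mult.assoc)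
        show ?thesis unfolding e1 e3 using a cc by linarith
      qed
      finally show ?thesis .
    qed
  qed
  have ne: "{liquid_welfare n v B y | y. (\<forall>i<n. 0 \<le> y i) \<and> (\<Sum>i<n. y i) = 1} \<noteq> {}"
  proof -
    define y1 :: "nat \<Rightarrow> real" where "y1 = (\<lambda>i. if i = 0 then 1 else 0)"
    have P: "(\<forall>i<n. 0 \<le> y1 i) \<and> (\<Sum>i<n. y1 i) = 1"
      using n2 by (simp add: y1_def)
    have "liquid_welfare n v B y1 \<in> {liquid_welfare n v B y | y. (\<forall>i<n. 0 \<le> y i) \<and> (\<Sum>i<n. y i) = 1}"
      by (rule CollectI, rule exI[of _ y1]) (use P in simp)
    then show ?thesis by (intro notI) simp
  qed
  have "opt_liquid_welfare n v B \<le> 128 * real k * W"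
    unfolding opt_liquid_welfare_def by (rule cSup_least[OF ne]) (use bound in auto)
  then show ?thesis using WWo by (simp add: W_def al_def k_def)
qed

theorem mainTheorem17:
  shows "\<exists>C>0. \<forall>(n::nat) (v::nat \<Rightarrow> real \<Rightarrow> real) (B::nat \<Rightarrow> real) (ord::nat list)
            (r1::nat) (r2::nat) (x::nat \<Rightarrow> real) (pay::nat \<Rightarrow> real) (x'::nat \<Rightarrow> real) (pay'::nat \<Rightarrow> real).
     n \<ge> 2 \<and>
     (\<forall>i<n. concave_on {0..1} (v i) \<and> mono_on {0..1} (v i) \<and> (\<forall>t\<in>{0..1}. 0 \<le> v i t)) \<and>
     (\<forall>i<n. 0 < B i) \<and>
     distinct ord \<and> set ord = {..<n} \<and>
     r1 < n \<and> (\<forall>i<n. vbar v B i (1/2) \<le> vbar v B r1 (1/2)) \<and>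
     r2 < n \<and> r2 \<noteq> r1 \<and> (\<forall>i<n. i \<noteq> r1 \<longrightarrow> vbar v B i (1/2) \<le> vbar v B r2 (1/2)) \<and>
     sell_without n v B ord r1 x pay \<and>
     sell_without n v B ord r2 x' pay'
     \<longrightarrow> liquid_welfare n v B (ep_allocation v B r1 r2 x x' pay')
           \<ge> opt_liquid_welfare n v B / (C * ln (real n))"
proof (intro exI[of _ "2000::real"] conjI allI impI)
  show "(0::real) < 2000" by simp
  fix n :: nat and v :: "nat \<Rightarrow> real \<Rightarrow> real" and B :: "nat \<Rightarrow> real" and ord :: "nat list"
    and r1 r2 :: nat and x pay x' pay' :: "nat \<Rightarrow> real"
  assume H: "n \<ge> 2 \<and>
     (\<forall>i<n. concave_on {0..1} (v i) \<and> mono_on {0..1} (v i) \<and> (\<forall>t\<in>{0..1}. 0 \<le> v i t)) \<and>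
     (\<forall>i<n. 0 < B i) \<and>
     distinct ord \<and> set ord = {..<n} \<and>
     r1 < n \<and> (\<forall>i<n. vbar v B i (1/2) \<le> vbar v B r1 (1/2)) \<and>
     r2 < n \<and> r2 \<noteq> r1 \<and> (\<forall>i<n. i \<noteq> r1 \<longrightarrow> vbar v B i (1/2) \<le> vbar v B r2 (1/2)) \<and>
     sell_without n v B ord r1 x pay \<and>
     sell_without n v B ord r2 x' pay'"
  define W where "W = liquid_welfare n v B (ep_allocation v B r1 r2 x x' pay')"
  define Op where "Op = opt_liquid_welfare n v B"
  have n2: "n \<ge> 2" using H by simp
  have mb: "Op \<le> 128 * real (kpar n) * W" "0 \<le> W"
    using main_bound[of n v B ord r1 r2 x pay x' pay'] H by (auto simp: W_def Op_def)
  have kb: "real (kpar n) \<le> 14 * ln (real n)" using kpar_bounds[OF n2] by simp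
  have lnp: "0 < ln (real n)" using n2 by simp
  have "Op \<le> 128 * real (kpar n) * W" by (rule mb(1))
  also have "128 * real (kpar n) * W \<le> 128 * (14 * ln (real n)) * W"
    using kb mb(2) by (intro mult_right_mono) auto
  also have "\<dots> \<le> 2000 * ln (real n) * W" using lnp mb(2) by (intro mult_right_mono) auto
  finally have "Op \<le> (2000 * ln (real n)) * W" .
  then have "Op / (2000 * ln (real n)) \<le> W" using lnp by (simp add: divide_le_eq mult.commute)
  then show "opt_liquid_welfare n v B / (2000 * ln (real n)) \<le> liquid_welfare n v B (ep_allocation v B r1 r2 x x' pay')"
    by (simp add: W_def Op_def)
qed

end
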